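(* Let $k$ be a positive integer and let $G$ be a finite, simple, undirected, connected graph of order at least two. (a) If $G$ admits a pairing distance-$k$ resolving set, then $O_{R,k}(G)=\mathcal{M}$. (b) If $G$ admits a quasi-pairing distance-$k$ resolving set, then $O_{R,k}(G)\in\{\mathcal{M},\mathcal{N}\}$.
   Context: $d$ is the shortest-path distance and $d_k(x,y)=\min\{d(x,y),k+1\}$. A set $S\subseteq V(G)$ is a distance-$k$ resolving set if for all distinct $x,y$ some $z\in S$ has $d_k(x,z)\ne d_k(y,z)$. Let $\alpha$ be a positive integer and $X=\{\{u_1,w_1\},\dots,\{u_\alpha,w_\alpha\}\}$ a family of $\alpha$ pairwise disjoint 2-element subsets of $V(G)$ (so $|\bigcup X|=2\alpha$). Call $Z\subseteq V(G)$ a transversal of $X$ if $|Z|=\alpha$ and $Z\cap\{u_i,w_i\}\ne\emptyset$ for all $i$. $X$ is a pairing distance-$k$ resolving set if every transversal $Z$ of $X$ is a distance-$k$ resolving set. $X$ is a quasi-pairing distance-$k$ resolving set if no transversal of $X$ is a distance-$k$ resolving set, but there is a vertex $v\in V(G)-\bigcup X$ such that $Z\cup\{v\}$ is a distance-$k$ resolving set for every transversal $Z$. In the Maker-Breaker distance-$k$ resolving game on $G$, Maker and Breaker alternately select a not-yet-chosen vertex; Maker wins if his selected vertices form a distance-$k$ resolving set, Breaker wins otherwise. $O_{R,k}(G)=\mathcal{M}$ if Maker has a winning strategy whether he moves first or second, $\mathcal{B}$ if Breaker has a winning strategy whether she moves first or second, and $\mathcal{N}$ if the first player has a winning strategy.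 *)

theory Defs
  imports Main
begin

definition simple_graph :: "'a set \<Rightarrow> ('a \<Rightarrow> 'a \<Rightarrow> bool) \<Rightarrow> bool" where
  "simple_graph V E \<longleftrightarrow> finite V \<and> (\<forall>x y. E x y \<longrightarrow> x \<in> V \<and> y \<in> V)
     \<and> (\<forall>x y. E x y \<longrightarrow> E y x) \<and> (\<forall>x. \<not> E x x)"

definition is_walk :: "'a set \<Rightarrow> ('a \<Rightarrow> 'a \<Rightarrow> bool) \<Rightarrow> 'a list \<Rightarrow> bool" where
  "is_walk V E xs \<longleftrightarrow> xs \<noteq> [] \<and> set xs \<subseteq> V \<and>
     (\<forall>i. Suc i < length xs \<longrightarrow> E (xs ! i) (xs ! Suc i))"

definition graph_connected :: "'a set \<Rightarrow> ('a \<Rightarrow> 'a \<Rightarrow> bool) \<Rightarrow> bool" where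
  "graph_connected V E \<longleftrightarrow> (\<forall>x\<in>V. \<forall>y\<in>V. \<exists>xs. is_walk V E xs \<and> hd xs = x \<and> last xs = y)"

definition gdist :: "'a set \<Rightarrow> ('a \<Rightarrow> 'a \<Rightarrow> bool) \<Rightarrow> 'a \<Rightarrow> 'a \<Rightarrow> nat" where
  "gdist V E x y = (LEAST n. \<exists>xs. is_walk V E xs \<and> hd xs = x \<and> last xs = y \<and> length xs = Suc n)"

definition dist_k :: "'a set \<Rightarrow> ('a \<Rightarrow> 'a \<Rightarrow> bool) \<Rightarrow> nat \<Rightarrow> 'a \<Rightarrow> 'a \<Rightarrow> nat" where
  "dist_k V E k x y = min (gdist V E x y) (k + 1)"

definition k_resolving :: "'a set \<Rightarrow> ('a \<Rightarrow> 'a \<Rightarrow> bool) \<Rightarrow> nat \<Rightarrow> 'a set \<Rightarrow> bool" where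
  "k_resolving V E k S \<longleftrightarrow> S \<subseteq> V \<and>
     (\<forall>x\<in>V. \<forall>y\<in>V. x \<noteq> y \<longrightarrow> (\<exists>z\<in>S. dist_k V E k x z \<noteq> dist_k V E k y z))"

definition pair_family :: "'a set \<Rightarrow> 'a set set \<Rightarrow> bool" where
  "pair_family V X \<longleftrightarrow> finite X \<and> card X \<ge> 1 \<and> (\<forall>p\<in>X. p \<subseteq> V \<and> card p = 2)
     \<and> (\<forall>p\<in>X. \<forall>q\<in>X. p \<noteq> q \<longrightarrow> p \<inter> q = {})"

definition transversal :: "'a set \<Rightarrow> 'a set set \<Rightarrow> 'a set \<Rightarrow> bool" where
  "transversal V X Z \<longleftrightarrow> Z \<subseteq> V \<and> card Z = card X \<and> (\<forall>p\<in>X. Z \<inter> p \<noteq> {})"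

definition pairing_resolving :: "'a set \<Rightarrow> ('a \<Rightarrow> 'a \<Rightarrow> bool) \<Rightarrow> nat \<Rightarrow> 'a set set \<Rightarrow> bool" where
  "pairing_resolving V E k X \<longleftrightarrow> pair_family V X \<and>
     (\<forall>Z. transversal V X Z \<longrightarrow> k_resolving V E k Z)"

definition quasi_pairing_resolving :: "'a set \<Rightarrow> ('a \<Rightarrow> 'a \<Rightarrow> bool) \<Rightarrow> nat \<Rightarrow> 'a set set \<Rightarrow> bool" where
  "quasi_pairing_resolving V E k X \<longleftrightarrow> pair_family V X \<and>
     (\<forall>Z. transversal V X Z \<longrightarrow> \<not> k_resolving V E k Z) \<and>
     (\<exists>v \<in> V - \<Union>X. \<forall>Z. transversal V X Z \<longrightarrow> k_resolving V E k (insert v Z))"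

(* A position is (M, B, maker_to_move),
   M = Maker's vertices, B = Breaker's vertices. M B t  means Maker has a winning strategy from that position. *)
inductive maker_wins :: "'a set \<Rightarrow> ('a \<Rightarrow> 'a \<Rightarrow> bool) \<Rightarrow> nat \<Rightarrow> 'a set \<Rightarrow> 'a set \<Rightarrow> bool \<Rightarrow> bool"
  for V E k where
  end_win: "V - M - B = {} \<Longrightarrow> k_resolving V E k M \<Longrightarrow> maker_wins V E k M B t"
| maker_move: "v \<in> V - M - B \<Longrightarrow> maker_wins V E k (insert v M) B False \<Longrightarrow> maker_wins V E k M B True"
| breaker_move: "V - M - B \<noteq> {} \<Longrightarrow> (\<And>v. v \<in> V - M - B \<Longrightarrow> maker_wins V E k M (insert v B) True)
     \<Longrightarrow> maker_wins V E k M B False"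

datatype outcome = Outcome_M | Outcome_B | Outcome_N | Outcome_P

(* Maker first: maker_wins {} {} True; Maker second: maker_wins {} {} False.
   Since the game is finite, Breaker has a winning strategy iff Maker has none. *)
definition game_outcome :: "'a set \<Rightarrow> ('a \<Rightarrow> 'a \<Rightarrow> bool) \<Rightarrow> nat \<Rightarrow> outcome" where
  "game_outcome V E k =
    (let mf = maker_wins V E k {} {} True; ms = maker_wins V E k {} {} False in
     if mf \<and> ms then Outcome_M
     else if \<not> mf \<and> \<not> ms then Outcome_B
     else if mf \<and> \<not> ms then Outcome_N
     else Outcome_P)"

end

theory Submission
  imports Defs
begin

lemma strategy:
  fixes V :: "'a set" and E k X Minit
  assumes fin: "finite V" and pf: "pair_family V X"
    and win: "\<And>M. Minit \<subseteq> M \<Longrightarrow> M \<subseteq> V \<Longrightarrow> (\<forall>p\<in>X. p \<inter> M \<noteq> {}) \<Longrightarrow> k_resolving V E k M"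
  shows "card (V - M - B) = n \<Longrightarrow> M \<subseteq> V \<Longrightarrow> Minit \<subseteq> M \<Longrightarrow>
    (\<forall>p\<in>X. p \<inter> M = {} \<and> p \<inter> B \<noteq> {} \<longrightarrow> t \<and> p - B \<noteq> {} \<and>
        (\<forall>q\<in>X. q \<inter> M = {} \<and> q \<inter> B \<noteq> {} \<longrightarrow> q = p))
    \<Longrightarrow> maker_wins V E k M B t"
proof (induction n arbitrary: M B t rule: less_induct)
  case (less n)
  have pV: "\<And>p. p \<in> X \<Longrightarrow> p \<subseteq> V" and pc: "\<And>p. p \<in> X \<Longrightarrow> card p = 2"
    and pd: "\<And>p q. p \<in> X \<Longrightarrow> q \<in> X \<Longrightarrow> p \<noteq> q \<Longrightarrow> p \<inter> q = {}"
    using pf unfolding pair_family_def by auto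
  show ?case
  proof (cases "V - M - B = {}")
    case True
    have "\<forall>p\<in>X. p \<inter> M \<noteq> {}"
    proof
      fix p assume p: "p \<in> X"
      show "p \<inter> M \<noteq> {}"
      proof
        assume pm: "p \<inter> M = {}"
        have "p \<noteq> {}" using pc[OF p] by auto
        moreover have "p \<subseteq> B" using pV[OF p] True pm by blast
        ultimately show False using less.prems(4) p pm by blast
      qed
    qed
    then show ?thesis using win less.prems True by (blast intro: maker_wins.end_win)
  next
    case False
    show ?thesis
    proof (cases t)
      case True
      obtain v where v: "v \<in> V - M - B"
        and vbad: "\<forall>p\<in>X. p \<inter> M = {} \<and> p \<inter> B \<noteq> {} \<longrightarrow> v \<in> p"
      proof (cases "\<exists>p\<in>X. p \<inter> M = {} \<and> p \<inter> B \<noteq> {}")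
        case True
        then obtain p where p: "p \<in> X" "p \<inter> M = {}" "p \<inter> B \<noteq> {}" by blast
        then have h: "p - B \<noteq> {}" "\<forall>q\<in>X. q \<inter> M = {} \<and> q \<inter> B \<noteq> {} \<longrightarrow> q = p"
          using less.prems(4) by blast+
        then obtain v where "v \<in> p - B" by blast
        then show ?thesis using that p h pV[OF p(1)] by blast
      next
        case c: False
        from \<open>V - M - B \<noteq> {}\<close> obtain v where "v \<in> V - M - B" by blast
        then show ?thesis using that c by blast
      qed
      have lt: "card (V - insert v M - B) < n"
      proof -
        have "V - insert v M - B = (V - M - B) - {v}" by blast
        moreover have "finite (V - M - B)" using fin by simp
        moreover have "card ((V - M - B) - {v}) < card (V - M - B)"
          using fin v by (intro card_Diff1_less) auto
        ultimately show ?thesis using less.prems(1) by simp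
      qed
      have "maker_wins V E k (insert v M) B False"
        apply (rule less.IH[OF lt refl])
        subgoal using less.prems(2) v by blast
        subgoal using less.prems(3) by blast
        subgoal using vbad by blast
        done
      then have "maker_wins V E k M B True" using v by (rule_tac maker_wins.maker_move)
      then show ?thesis using True by simp
    next
      case tF: False
      have "maker_wins V E k M B False"
      proof (intro maker_wins.breaker_move[OF False])
        fix v assume v: "v \<in> V - M - B"
        have lt: "card (V - M - insert v B) < n"
        proof -
          have "V - M - insert v B = (V - M - B) - {v}" by blast
          moreover have "finite (V - M - B)" using fin by simp
          moreover have "card ((V - M - B) - {v}) < card (V - M - B)"
            using fin v by (intro card_Diff1_less) auto
          ultimately show ?thesis using less.prems(1) by simp
        qed
        have old: "\<forall>p\<in>X. p \<inter> M = {} \<longrightarrow> p \<inter> B = {}" using less.prems(4) tF by blast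
        show "maker_wins V E k M (insert v B) True"
        proof (rule less.IH[OF lt refl less.prems(2,3)], intro ballI impI)
          fix p assume p: "p \<in> X" and bad: "p \<inter> M = {} \<and> p \<inter> insert v B \<noteq> {}"
          have pB: "p \<inter> B = {}" using old p bad by blast
          then have vp: "v \<in> p" using bad by blast
          have "card (p - {v}) = 1" using pc[OF p] vp by simp
          then obtain w where "w \<in> p - {v}" by (metis card_1_singletonE insertI1)
          then have "p - insert v B \<noteq> {}" using pB by blast
          moreover have "\<forall>q\<in>X. q \<inter> M = {} \<and> q \<inter> insert v B \<noteq> {} \<longrightarrow> q = p"
          proof (intro ballI impI)
            fix q assume q: "q \<in> X" and qb: "q \<inter> M = {} \<and> q \<inter> insert v B \<noteq> {}"
            have "q \<inter> B = {}" using old q qb by blast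
            then have "v \<in> q" using qb by blast
            then show "q = p" using pd[OF q p] vp by blast
          qed
          ultimately show "True \<and> p - insert v B \<noteq> {} \<and>
             (\<forall>q\<in>X. q \<inter> M = {} \<and> q \<inter> insert v B \<noteq> {} \<longrightarrow> q = p)" by simp
        qed
      qed
      then show ?thesis using tF by simp
    qed
  qed
qed

lemma transversal_in:
  assumes pf: "pair_family V X" and MV: "M \<subseteq> V" and hit: "\<forall>p\<in>X. p \<inter> M \<noteq> {}"
  shows "\<exists>Z. transversal V X Z \<and> Z \<subseteq> M"
proof -
  define c where "c p = (SOME x. x \<in> p \<inter> M)" for p
  have c: "c p \<in> p \<inter> M" if "p \<in> X" for p
  proof -
    from hit that obtain x where "x \<in> p \<inter> M" by blast
    then show ?thesis unfolding c_def by (rule someI)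
  qed
  have pd: "\<And>p q. p \<in> X \<Longrightarrow> q \<in> X \<Longrightarrow> p \<noteq> q \<Longrightarrow> p \<inter> q = {}"
    using pf unfolding pair_family_def by auto
  have "inj_on c X"
  proof (rule inj_onI)
    fix p q assume pq: "p \<in> X" "q \<in> X" "c p = c q"
    have "c p \<in> p \<inter> q" using c[OF pq(1)] c[OF pq(2)] pq(3) by simp
    then show "p = q" using pd[OF pq(1,2)] by auto
  qed
  then have cd: "card (c ` X) = card X" by (simp add: card_image)
  have sub: "c ` X \<subseteq> M" using c by auto
  have meet: "\<forall>p\<in>X. c ` X \<inter> p \<noteq> {}"
  proof
    fix p assume "p \<in> X"
    then have "c p \<in> c ` X \<inter> p" using c by auto
    then show "c ` X \<inter> p \<noteq> {}" by auto
  qed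
  have "transversal V X (c ` X)" unfolding transversal_def using cd sub meet MV by simp
  then show ?thesis using sub by auto
qed

lemma resolving_mono:
  "k_resolving V E k Z \<Longrightarrow> Z \<subseteq> M \<Longrightarrow> M \<subseteq> V \<Longrightarrow> k_resolving V E k M"
  unfolding k_resolving_def by blast

theorem mainTheorem6:
  fixes V :: "'a set" and E :: "'a \<Rightarrow> 'a \<Rightarrow> bool" and k :: nat
  assumes "k \<ge> 1"
    and "simple_graph V E" and "graph_connected V E" and "card V \<ge> 2"
  shows "((\<exists>X. pairing_resolving V E k X) \<longrightarrow> game_outcome V E k = Outcome_M)
       \<and> ((\<exists>X. quasi_pairing_resolving V E k X) \<longrightarrow> game_outcome V E k \<in> {Outcome_M, Outcome_N})"
proof -
  have fin: "finite V" using assms(2) unfolding simple_graph_def by blast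
  have A: "maker_wins V E k {} {} True \<and> maker_wins V E k {} {} False"
    if "pairing_resolving V E k X" for X
  proof -
    have pf: "pair_family V X" using that unfolding pairing_resolving_def by blast
    have win: "k_resolving V E k M" if w: "{} \<subseteq> M" "M \<subseteq> V" "\<forall>p\<in>X. p \<inter> M \<noteq> {}" for M
    proof -
      obtain Z where "transversal V X Z" "Z \<subseteq> M" using transversal_in[OF pf w(2,3)] by blast
      then show ?thesis using \<open>pairing_resolving V E k X\<close> w(2) resolving_mono
        unfolding pairing_resolving_def by blast
    qed
    have s: "maker_wins V E k {} {} t" for t
      apply (rule strategy[where Minit="{}"])
      apply (rule fin)
      apply (rule pf)
      apply (rule win; assumption)
      apply (rule refl)
      apply simp_all
      done
    show ?thesis using s by blast
  qed
  have B: "maker_wins V E k {} {} True" if qp: "quasi_pairing_resolving V E k X" for X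
  proof -
    have pf: "pair_family V X" using qp unfolding quasi_pairing_resolving_def by blast
    obtain v where v: "v \<in> V - \<Union>X" and vZ: "\<forall>Z. transversal V X Z \<longrightarrow> k_resolving V E k (insert v Z)"
      using qp unfolding quasi_pairing_resolving_def by blast
    have win: "k_resolving V E k M" if w: "{v} \<subseteq> M" "M \<subseteq> V" "\<forall>p\<in>X. p \<inter> M \<noteq> {}" for M
    proof -
      obtain Z where "transversal V X Z" "Z \<subseteq> M" using transversal_in[OF pf w(2,3)] by blast
      then show ?thesis using vZ w resolving_mono[of V E k "insert v Z" M] by blast
    qed
    have "maker_wins V E k {v} {} False"
      apply (rule strategy[where Minit="{v}"])
      apply (rule fin)
      apply (rule pf)
      apply (rule win; assumption)
      apply (rule refl)
      using v apply simp_all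
      done
    then show ?thesis using v by (rule_tac maker_wins.maker_move) auto
  qed
  show ?thesis
  proof (intro conjI impI)
    assume "\<exists>X. pairing_resolving V E k X"
    then show "game_outcome V E k = Outcome_M" using A unfolding game_outcome_def Let_def by fastforce
  next
    assume "\<exists>X. quasi_pairing_resolving V E k X"
    then have "maker_wins V E k {} {} True" using B by blast
    then show "game_outcome V E k \<in> {Outcome_M, Outcome_N}" unfolding game_outcome_def Let_def by simp
  qed
qed

end
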